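(* For every rational number $\alpha>0$ there exists a rational function $g(t)=\sum_{k=1}^N\frac{a_k}{t-iw_k}$ (with $a_k,w_k\in\mathbb{C}$, $a_k\ne0$, $\Re w_k\ne0$) such that the Gabor system $\mathcal{G}(g;\alpha,1)$ is not a frame in $L^2(\mathbb{R})$.
   Context: $\mathcal{G}(g;\alpha,1)=\{e^{2\pi i n t}g(t-\alpha m)\}_{m,n\in\mathbb{Z}}$; it is a frame in $L^2(\mathbb{R})$ if there are $0<A\le B<\infty$ with $A\|f\|^2\le\sum_{m,n}|\langle f, e^{2\pi i n\cdot}g(\cdot-\alpha m)\rangle|^2\le B\|f\|^2$ for all $f\in L^2(\mathbb{R})$. *)

theory Defs
  imports "HOL-Analysis.Analysis"
begin

definition L2 :: "(real \<Rightarrow> complex) set" where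
  "L2 = {f. f \<in> borel_measurable lebesgue \<and> integrable lebesgue (\<lambda>t. (cmod (f t))\<^sup>2)}"

definition L2_inner :: "(real \<Rightarrow> complex) \<Rightarrow> (real \<Rightarrow> complex) \<Rightarrow> complex" where
  "L2_inner f h = (LINT t|lebesgue. f t * cnj (h t))"

definition L2_norm_sq :: "(real \<Rightarrow> complex) \<Rightarrow> real" where
  "L2_norm_sq f = (LINT t|lebesgue. (cmod (f t))\<^sup>2)"

definition gabor_atom :: "(real \<Rightarrow> complex) \<Rightarrow> real \<Rightarrow> int \<Rightarrow> int \<Rightarrow> real \<Rightarrow> complex" where
  "gabor_atom g \<alpha> m n t = exp (2 * of_real pi * \<i> * of_int n * of_real t) * g (t - \<alpha> * of_int m)"

definition gabor_frame :: "(real \<Rightarrow> complex) \<Rightarrow> real \<Rightarrow> bool" where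
  "gabor_frame g \<alpha> \<longleftrightarrow>
     (\<exists>(A::real) B. 0 < A \<and> A \<le> B \<and>
       (\<forall>f\<in>L2.
          let c = (\<lambda>(m, n). (cmod (L2_inner f (gabor_atom g \<alpha> m n)))\<^sup>2) in
          (c summable_on (UNIV :: (int \<times> int) set)) \<and>
          A * L2_norm_sq f \<le> infsum c UNIV \<and> infsum c UNIV \<le> B * L2_norm_sq f))"

end

theory Submission
  imports Defs
begin

definition ee :: "int \<Rightarrow> real \<Rightarrow> complex" where
  "ee n t = exp (2 * of_real pi * \<i> * of_int n * of_real t)"

lemma cont_ee[continuous_intros]: "continuous_on S (ee n)"
  unfolding ee_def by (intro continuous_intros)

lemma ee_int_one: "ee k 1 = 1"
proof -
  have "ee k 1 = exp ((2 * of_int k * pi) * \<i>)" unfolding ee_def by (simp add: algebra_simps)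
  also have "\<dots> = 1" by (rule exp_integer_2pi) simp
  finally show ?thesis .
qed

lemma integral_ee: "integral {0..1} (ee k) = (if k = 0 then 1 else 0)"
proof (cases "k = 0")
  case True
  have "ee 0 = (\<lambda>_. 1)" by (auto simp: ee_def fun_eq_iff)
  then show ?thesis using True by simp
next
  case False
  define c where "c = 2 * of_real pi * \<i> * (of_int k :: complex)"
  have c0: "c \<noteq> 0" using False by (simp add: c_def)
  have eec: "ee k t = exp (c * of_real t)" for t by (simp add: ee_def c_def)
  have "((\<lambda>t. exp (c * of_real t) / c) has_vector_derivative ee k t) (at t within {0..1})" for t
    apply (rule has_vector_derivative_real_field[of "\<lambda>z. exp (c * z) / c", simplified])
    using c0 by (auto intro!: derivative_eq_intros simp: eec)
  then have "(ee k has_integral (exp (c * of_real 1) / c - exp (c * of_real 0) / c)) {0..1}"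
    by (intro fundamental_theorem_of_calculus) auto
  moreover have "exp (c * of_real 1) = 1" using ee_int_one[of k] by (simp add: eec)
  ultimately show ?thesis using False by (simp add: integral_unique)
qed

lemma ee_mult_cnj: "ee n t * cnj (ee m t) = ee (n - m) t"
  by (simp add: ee_def exp_cnj exp_add[symmetric] algebra_simps)

lemma cnj_ee: "cnj (ee n t) = ee (-n) t"
  by (simp add: ee_def exp_cnj)

lemma orth: "integral {0..1} (\<lambda>t. ee n t * cnj (ee m t)) = (if n = m then 1 else 0)"
  by (simp add: ee_mult_cnj integral_ee)

lemma integral_of_real_cont:
  fixes f :: "real \<Rightarrow> real"
  assumes "continuous_on {a..b} f"
  shows "integral {a..b} (\<lambda>t. complex_of_real (f t)) = of_real (integral {a..b} f)"
  using has_integral_of_real[OF integrable_integral[OF integrable_continuous_interval[OF assms]]]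
  by (rule integral_unique)

lemma bessel:
  assumes psi: "continuous_on {0..1} \<psi>" and N: "finite N"
  shows "(\<Sum>n\<in>N. (cmod (integral {0..1} (\<lambda>t. \<psi> t * cnj (ee n t))))\<^sup>2)
          \<le> integral {0..1} (\<lambda>t. (cmod (\<psi> t))\<^sup>2)"
proof -
  define c where "c n = integral {0..1} (\<lambda>t. \<psi> t * cnj (ee n t))" for n
  define P where "P t = (\<Sum>n\<in>N. c n * ee n t)" for t
  have cP: "continuous_on {0..1} P" unfolding P_def by (intro continuous_intros)
  have ccnj: "continuous_on S (\<lambda>t. cnj (f t))" if "continuous_on S f" for S and f :: "real \<Rightarrow> complex"
    using that by (intro continuous_intros)
  have I: "(\<lambda>t. u t * cnj (v t)) integrable_on {0..1}"
    if "continuous_on {0..1} u" "continuous_on {0..1} v" for u v :: "real \<Rightarrow> complex"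
    using that by (intro integrable_continuous_interval continuous_intros ccnj)
  have Ie: "continuous_on {0..1} (ee n)" for n by (rule cont_ee)
  have S1: "integral {0..1} (\<lambda>t. \<psi> t * cnj (P t)) = (\<Sum>n\<in>N. cnj (c n) * c n)"
  proof -
    have "integral {0..1} (\<lambda>t. \<psi> t * cnj (P t)) = integral {0..1} (\<lambda>t. \<Sum>n\<in>N. cnj (c n) * (\<psi> t * cnj (ee n t)))"
      by (simp add: P_def sum_distrib_left algebra_simps)
    also have "\<dots> = (\<Sum>n\<in>N. integral {0..1} (\<lambda>t. cnj (c n) * (\<psi> t * cnj (ee n t))))"
      by (rule integral_sum[OF N]) (intro integrable_continuous_interval continuous_intros ccnj psi)
    also have "\<dots> = (\<Sum>n\<in>N. cnj (c n) * c n)" by (simp add: c_def)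
    finally show ?thesis .
  qed
  have S2: "integral {0..1} (\<lambda>t. P t * cnj (\<psi> t)) = (\<Sum>n\<in>N. c n * cnj (c n))"
  proof -
    have "integral {0..1} (\<lambda>t. P t * cnj (\<psi> t)) = cnj (integral {0..1} (\<lambda>t. \<psi> t * cnj (P t)))"
      by (simp add: integral_cnj mult.commute)
    then show ?thesis using S1 by (simp add: mult.commute)
  qed
  have S3: "integral {0..1} (\<lambda>t. P t * cnj (P t)) = (\<Sum>n\<in>N. c n * cnj (c n))"
  proof -
    have "integral {0..1} (\<lambda>t. P t * cnj (P t)) =
          integral {0..1} (\<lambda>t. \<Sum>n\<in>N. \<Sum>m\<in>N. c n * cnj (c m) * (ee n t * cnj (ee m t)))"
      unfolding P_def cnj_sum complex_cnj_mult sum_product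
      by (intro arg_cong[where f="integral _"] ext sum.cong refl) (simp add: algebra_simps)
    also have "\<dots> = (\<Sum>n\<in>N. integral {0..1} (\<lambda>t. \<Sum>m\<in>N. c n * cnj (c m) * (ee n t * cnj (ee m t))))"
      by (rule integral_sum[OF N]) (intro integrable_continuous_interval continuous_intros ccnj Ie)
    also have "\<dots> = (\<Sum>n\<in>N. \<Sum>m\<in>N. integral {0..1} (\<lambda>t. c n * cnj (c m) * (ee n t * cnj (ee m t))))"
      by (intro sum.cong refl integral_sum[OF N]) (intro integrable_continuous_interval continuous_intros ccnj Ie)
    also have "\<dots> = (\<Sum>n\<in>N. \<Sum>m\<in>N. c n * cnj (c m) * (if n = m then 1 else 0))"
      by (simp add: orth)
    also have "\<dots> = (\<Sum>n\<in>N. c n * cnj (c n))"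
      by (simp add: N if_distrib cong: if_cong)
    finally show ?thesis .
  qed
  have expand: "(\<psi> t - P t) * cnj (\<psi> t - P t) = \<psi> t * cnj (\<psi> t) - \<psi> t * cnj (P t) - P t * cnj (\<psi> t) + P t * cnj (P t)" for t
    by (simp add: algebra_simps)
  have "integral {0..1} (\<lambda>t. (\<psi> t - P t) * cnj (\<psi> t - P t)) =
        integral {0..1} (\<lambda>t. \<psi> t * cnj (\<psi> t)) - integral {0..1} (\<lambda>t. \<psi> t * cnj (P t))
         - integral {0..1} (\<lambda>t. P t * cnj (\<psi> t)) + integral {0..1} (\<lambda>t. P t * cnj (P t))"
    unfolding expand
    by (subst integral_add integral_diff, (intro I integrable_diff cP psi)+)+ simp
  also have "\<dots> = integral {0..1} (\<lambda>t. \<psi> t * cnj (\<psi> t)) - (\<Sum>n\<in>N. c n * cnj (c n))"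
    by (simp add: S1 S2 S3 mult.commute)
  finally have E: "integral {0..1} (\<lambda>t. (\<psi> t - P t) * cnj (\<psi> t - P t)) =
        integral {0..1} (\<lambda>t. \<psi> t * cnj (\<psi> t)) - (\<Sum>n\<in>N. c n * cnj (c n))" .
  have sq: "z * cnj z = of_real ((cmod z)\<^sup>2)" for z
    by (metis complex_norm_square of_real_power)
  have cn1: "continuous_on {0..1} (\<lambda>t. (cmod (\<psi> t - P t))\<^sup>2)" by (intro continuous_intros psi cP)
  have cn2: "continuous_on {0..1} (\<lambda>t. (cmod (\<psi> t))\<^sup>2)" by (intro continuous_intros psi)
  have E2: "of_real (integral {0..1} (\<lambda>t. (cmod (\<psi> t - P t))\<^sup>2)) =
        (of_real (integral {0..1} (\<lambda>t. (cmod (\<psi> t))\<^sup>2) - (\<Sum>n\<in>N. (cmod (c n))\<^sup>2)) :: complex)"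
    using E unfolding sq integral_of_real_cont[OF cn1] integral_of_real_cont[OF cn2]
    by (simp only: of_real_diff of_real_sum)
  then have "integral {0..1} (\<lambda>t. (cmod (\<psi> t - P t))\<^sup>2) = integral {0..1} (\<lambda>t. (cmod (\<psi> t))\<^sup>2) - (\<Sum>n\<in>N. (cmod (c n))\<^sup>2)"
    using of_real_eq_iff by blast
  moreover have "0 \<le> integral {0..1} (\<lambda>t. (cmod (\<psi> t - P t))\<^sup>2)"
    by (rule integral_nonneg) (auto intro: integrable_continuous_interval cn1)
  ultimately show ?thesis by (simp add: c_def)
qed


definition Hc :: "real \<Rightarrow> complex" where "Hc x = 1 / (of_real x + \<i>)"

lemma Hc_den: "complex_of_real x + \<i> \<noteq> 0"
  by (simp add: complex_eq_iff)

lemma cont_Hc[continuous_intros]: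
  assumes "continuous_on S f" shows "continuous_on S (\<lambda>t. Hc (f t))"
  unfolding Hc_def by (intro continuous_intros assms) (simp add: Hc_den)

lemma norm_Hc_sq: "(cmod (Hc x))\<^sup>2 = 1 / (x\<^sup>2 + 1)"
proof -
  have "(cmod (of_real x + \<i>))\<^sup>2 = x\<^sup>2 + 1" by (simp add: cmod_power2)
  then show ?thesis by (simp add: Hc_def norm_divide power_divide)
qed

lemma ee_shift_int: "ee n (x + of_int k) = ee n x"
proof -
  have "ee n (x + of_int k) = ee n x * exp ((2 * of_int (n * k) * pi) * \<i>)"
    unfolding ee_def by (simp add: exp_add[symmetric] algebra_simps)
  also have "exp ((2 * of_int (n * k) * pi) * \<i>) = 1" by (rule exp_integer_2pi) simp
  finally show ?thesis by simp
qed

lemma sum_inv_sq_nat: "(\<Sum>m\<in>{-int R..int R}. 1 / (1 + (real_of_int m)\<^sup>2)) \<le> 5 - 4 / (real R + 1)"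
proof (induction R)
  case 0 then show ?case by simp
next
  case (Suc R)
  have set: "{-int (Suc R)..int (Suc R)} = insert (int R + 1) (insert (- int R - 1) {-int R..int R})"
    by auto
  have step: "1 / (1 + (real R + 1)\<^sup>2) \<le> 2 / (real R + 1) - 2 / (real R + 2)"
  proof -
    have "2 / (real R + 1) - 2 / (real R + 2) = 2 / ((real R + 1) * (real R + 2))"
      by (simp add: field_simps)
    moreover have "1 / (1 + (real R + 1)\<^sup>2) \<le> 2 / ((real R + 1) * (real R + 2))"
      by (simp add: divide_simps power2_eq_square algebra_simps)
    ultimately show ?thesis by simp
  qed
  have "(\<Sum>m\<in>{-int (Suc R)..int (Suc R)}. 1 / (1 + (real_of_int m)\<^sup>2)) =
        2 * (1 / (1 + (real R + 1)\<^sup>2)) + (\<Sum>m\<in>{-int R..int R}. 1 / (1 + (real_of_int m)\<^sup>2))"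
    unfolding set by (simp add: power2_commute add.commute[of 1 "real R"])
  also have "\<dots> \<le> 2 * (2 / (real R + 1) - 2 / (real R + 2)) + (5 - 4 / (real R + 1))"
    using add_mono[OF mult_left_mono[OF step, of 2] Suc.IH] by simp
  also have "\<dots> = 5 - 4 / (real (Suc R) + 1)" by (simp add: divide_simps) (simp add: algebra_simps)
  finally show ?case .
qed

lemma sum_inv_sq: assumes "finite M" shows "(\<Sum>m\<in>M. 1 / (1 + (real_of_int m)\<^sup>2)) \<le> 5"
proof -
  define R where "R = nat (Max (insert 0 (abs ` M)))"
  have "M \<subseteq> {-int R..int R}"
  proof
    fix m assume "m \<in> M"
    then have "\<bar>m\<bar> \<le> Max (insert 0 (abs ` M))" using assms by (intro Max_ge) auto
    then show "m \<in> {-int R..int R}" unfolding R_def by auto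
  qed
  then have "(\<Sum>m\<in>M. 1 / (1 + (real_of_int m)\<^sup>2)) \<le> (\<Sum>m\<in>{-int R..int R}. 1 / (1 + (real_of_int m)\<^sup>2))"
    by (intro sum_mono2) auto
  also have "\<dots> \<le> 5 - 4 / (real R + 1)" by (rule sum_inv_sq_nat)
  also have "\<dots> \<le> 5" by simp
  finally show ?thesis .
qed


lemma pt_bound:
  fixes \<alpha> t :: real and m :: int
  assumes a: "\<alpha> > 0" and t: "0 \<le> t" "t \<le> 1"
  shows "1 / ((t - \<alpha> * m)\<^sup>2 + 1) \<le> 8 / (min 1 (\<alpha>\<^sup>2) * (1 + (real_of_int m)\<^sup>2))"
proof -
  define \<mu> where "\<mu> = min 1 (\<alpha>\<^sup>2)"
  have mu0: "\<mu> > 0" using a by (simp add: \<mu>_def)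
  have mu1: "\<mu> \<le> 1" "\<mu> \<le> \<alpha>\<^sup>2" by (auto simp: \<mu>_def)
  have key: "\<mu> * (1 + (real_of_int m)\<^sup>2) \<le> 8 * ((t - \<alpha> * m)\<^sup>2 + 1)"
  proof (cases "\<alpha> * \<bar>real_of_int m\<bar> \<ge> 2")
    case True
    have m1: "(real_of_int m)\<^sup>2 \<ge> 1"
    proof -
      have "m \<noteq> 0" using True by auto
      then have "\<bar>real_of_int m\<bar> \<ge> 1" by linarith
      then show ?thesis using abs_le_square_iff[of 1 "real_of_int m"] by simp
    qed
    have "\<bar>t - \<alpha> * m\<bar> \<ge> \<alpha> * \<bar>real_of_int m\<bar> / 2"
    proof -
      have "\<bar>\<alpha> * m\<bar> = \<alpha> * \<bar>real_of_int m\<bar>" using a by (simp add: abs_mult)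
      then show ?thesis using True t by linarith
    qed
    then have "(\<alpha> * \<bar>real_of_int m\<bar> / 2)\<^sup>2 \<le> (t - \<alpha> * m)\<^sup>2"
      using abs_le_square_iff[of "\<alpha> * \<bar>real_of_int m\<bar> / 2" "t - \<alpha> * m"] a by (simp add: abs_mult)
    then have A: "\<alpha>\<^sup>2 * (real_of_int m)\<^sup>2 \<le> 4 * (t - \<alpha> * m)\<^sup>2"
      by (simp add: power_mult_distrib power_divide)
    have "\<mu> * (1 + (real_of_int m)\<^sup>2) \<le> \<alpha>\<^sup>2 * (1 + (real_of_int m)\<^sup>2)"
      using mu1 by (intro mult_right_mono) auto
    also have "\<dots> \<le> \<alpha>\<^sup>2 * (2 * (real_of_int m)\<^sup>2)"
      using m1 by (intro mult_left_mono) auto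
    finally show ?thesis using A by simp
  next
    case False
    then have "(\<alpha> * \<bar>real_of_int m\<bar>)\<^sup>2 \<le> 2\<^sup>2"
      using a by (intro power_mono) auto
    then have B: "\<alpha>\<^sup>2 * (real_of_int m)\<^sup>2 \<le> 4" by (simp add: power_mult_distrib)
    have "\<mu> * (real_of_int m)\<^sup>2 \<le> \<alpha>\<^sup>2 * (real_of_int m)\<^sup>2"
      using mu1 by (intro mult_right_mono) auto
    then have "\<mu> * (1 + (real_of_int m)\<^sup>2) \<le> 5" using B mu1 by (simp add: algebra_simps)
    moreover have "5 \<le> 8 * ((t - \<alpha> * m)\<^sup>2 + 1)"
      using zero_le_power2[of "t - \<alpha> * m"] unfolding distrib_left by linarith
    ultimately show ?thesis by (rule order_trans)
  qed
  have p1: "0 < (t - \<alpha> * m)\<^sup>2 + 1" by (simp add: add_nonneg_pos)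
  have p2: "0 < \<mu> * (1 + (real_of_int m)\<^sup>2)" using mu0 by (simp add: add_pos_nonneg)
  show ?thesis unfolding \<mu>_def[symmetric]
    using key p1 p2 by (simp add: divide_simps)
qed


lemma coef:
  fixes G :: "real \<Rightarrow> complex" and K L m n :: int
  assumes cnjG: "\<And>x. cnj (G x) = Hc x - Hc (x + 1)" and K: "K \<ge> 1" and KL: "\<alpha> * of_int L = of_int K"
  shows "L2_inner (\<lambda>t. complex_of_real (indicator {0..real_of_int K} t)) (gabor_atom G \<alpha> m n) =
         integral {0..1} (\<lambda>t. Hc (t - \<alpha> * of_int m) * cnj (ee n t))
       - integral {0..1} (\<lambda>t. Hc (t - \<alpha> * of_int (m - L)) * cnj (ee n t))"
proof -
  define \<psi> where "\<psi> t = Hc (t - \<alpha> * of_int m) * cnj (ee n t)" for t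
  have ccnj: "continuous_on S (\<lambda>t. cnj (f t))" if "continuous_on S f" for S and f :: "real \<Rightarrow> complex"
    using that by (intro continuous_intros)
  have c\<psi>: "continuous_on S \<psi>" for S unfolding \<psi>_def by (intro continuous_intros ccnj cont_ee)
  have c\<psi>1: "continuous_on S (\<lambda>t. \<psi> (t + 1))" for S
    by (rule continuous_on_compose2[OF c\<psi>[of UNIV]]) (auto intro: continuous_intros)
  have atom: "cnj (gabor_atom G \<alpha> m n t) = \<psi> t - \<psi> (t + 1)" for t
  proof -
    have e1: "ee n (t + 1) = ee n t" using ee_shift_int[of n t 1] by simp
    have "cnj (gabor_atom G \<alpha> m n t) = cnj (ee n t) * cnj (G (t - \<alpha> * of_int m))"
      by (simp add: gabor_atom_def ee_def)
    also have "\<dots> = \<psi> t - \<psi> (t + 1)" unfolding cnjG \<psi>_def e1 by (simp add: algebra_simps)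
    finally show ?thesis .
  qed
  have cat: "continuous_on S (\<lambda>t. cnj (gabor_atom G \<alpha> m n t))" for S
    unfolding atom by (intro continuous_on_diff c\<psi> c\<psi>1)
  have "L2_inner (\<lambda>t. complex_of_real (indicator {0..real_of_int K} t)) (gabor_atom G \<alpha> m n) =
        set_lebesgue_integral lebesgue {0..real_of_int K} (\<lambda>t. cnj (gabor_atom G \<alpha> m n t))"
    unfolding L2_inner_def set_lebesgue_integral_def by (simp add: scaleR_conv_of_real)
  also have "\<dots> = integral {0..real_of_int K} (\<lambda>t. cnj (gabor_atom G \<alpha> m n t))"
    by (rule set_lebesgue_integral_eq_integral(2)[OF absolutely_integrable_continuous_real[OF cat]])
  also have "\<dots> = integral {0..real_of_int K} \<psi> - integral {0..real_of_int K} (\<lambda>t. \<psi> (t + 1))"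
    unfolding atom by (rule integral_diff) (intro integrable_continuous_interval c\<psi> c\<psi>1)+
  also have "integral {0..real_of_int K} (\<lambda>t. \<psi> (t + 1)) = integral {1..real_of_int K + 1} \<psi>"
    using integral_shift_real_ivl[of 1 1 "real_of_int K + 1" \<psi>] by simp
  also have "integral {0..real_of_int K} \<psi> = integral {0..1} \<psi> + integral {1..real_of_int K} \<psi>"
    using K by (intro Henstock_Kurzweil_Integration.integral_combine[symmetric] integrable_continuous_interval c\<psi>) auto
  also have "integral {1..real_of_int K + 1} \<psi> = integral {1..real_of_int K} \<psi> + integral {real_of_int K..real_of_int K + 1} \<psi>"
    using K by (intro Henstock_Kurzweil_Integration.integral_combine[symmetric] integrable_continuous_interval c\<psi>) auto
  also have "integral {real_of_int K..real_of_int K + 1} \<psi> = integral {0..1} (\<lambda>x. \<psi> (x + real_of_int K))"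
    using integral_shift_real_ivl[of "real_of_int K" "real_of_int K" "real_of_int K + 1" \<psi>] by simp
  also have "(\<lambda>x. \<psi> (x + real_of_int K)) = (\<lambda>t. Hc (t - \<alpha> * of_int (m - L)) * cnj (ee n t))"
  proof
    fix x
    have "x + real_of_int K - \<alpha> * of_int m = x - \<alpha> * of_int (m - L)" using KL by (simp add: algebra_simps)
    then show "\<psi> (x + real_of_int K) = Hc (x - \<alpha> * of_int (m - L)) * cnj (ee n x)"
      unfolding \<psi>_def ee_shift_int by (simp only:)
  qed
  finally show ?thesis by (simp add: \<psi>_def)
qed


lemma coef_bound:
  fixes \<alpha> :: real and m :: int
  assumes a: "\<alpha> > 0" and N: "finite N"
  shows "(\<Sum>n\<in>N. (cmod (integral {0..1} (\<lambda>t. Hc (t - \<alpha> * of_int m) * cnj (ee n t))))\<^sup>2)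
          \<le> 8 / (min 1 (\<alpha>\<^sup>2) * (1 + (real_of_int m)\<^sup>2))"
proof -
  have c: "continuous_on {0..1} (\<lambda>t. Hc (t - \<alpha> * of_int m))" by (intro continuous_intros)
  have "(\<Sum>n\<in>N. (cmod (integral {0..1} (\<lambda>t. Hc (t - \<alpha> * of_int m) * cnj (ee n t))))\<^sup>2)
        \<le> integral {0..1} (\<lambda>t. (cmod (Hc (t - \<alpha> * of_int m)))\<^sup>2)"
    by (rule bessel[OF c N])
  also have "\<dots> \<le> 8 / (min 1 (\<alpha>\<^sup>2) * (1 + (real_of_int m)\<^sup>2))"
  proof -
    have i1: "(\<lambda>t. (cmod (Hc (t - \<alpha> * of_int m)))\<^sup>2) integrable_on {0..1}"
      by (intro integrable_continuous_interval continuous_intros)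
    have i2: "(\<lambda>t. 8 / (min 1 (\<alpha>\<^sup>2) * (1 + (real_of_int m)\<^sup>2))) integrable_on {0..1::real}"
      by (intro integrable_continuous_interval continuous_intros)
    have le: "(cmod (Hc (t - \<alpha> * of_int m)))\<^sup>2 \<le> 8 / (min 1 (\<alpha>\<^sup>2) * (1 + (real_of_int m)\<^sup>2))"
      if "t \<in> {0..1}" for t
      unfolding norm_Hc_sq using pt_bound[OF a, of t m] that by auto
    note X = Henstock_Kurzweil_Integration.integral_le[OF i1 i2 le]
    show ?thesis using X by simp
  qed
  finally show ?thesis .
qed

lemma sq_diff_le: "(cmod (x - y))\<^sup>2 \<le> 2 * (cmod x)\<^sup>2 + 2 * (cmod y)\<^sup>2"
proof -
  have "cmod (x - y) \<le> cmod x + cmod y" by (rule norm_triangle_ineq4)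
  then have "(cmod (x - y))\<^sup>2 \<le> (cmod x + cmod y)\<^sup>2" by (intro power_mono) auto
  also have "\<dots> \<le> 2 * (cmod x)\<^sup>2 + 2 * (cmod y)\<^sup>2"
    using zero_le_power2[of "cmod x - cmod y"] by (simp add: power2_eq_square algebra_simps)
  finally show ?thesis .
qed

theorem proposition5p3:
  fixes \<alpha> :: real
  assumes "\<alpha> \<in> \<rat>" and "\<alpha> > 0"
  shows "\<exists>(N::nat) (a::nat \<Rightarrow> complex) (w::nat \<Rightarrow> complex).
           N \<ge> 1 \<and> inj_on w {1..N} \<and>
           (\<forall>k\<in>{1..N}. a k \<noteq> 0 \<and> Re (w k) \<noteq> 0) \<and>
           \<not> gabor_frame (\<lambda>t. \<Sum>k=1..N. a k / (of_real t - \<i> * w k)) \<alpha>"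
proof -
  define a :: "nat \<Rightarrow> complex" where "a k = (if k = 1 then 1 else -1)" for k
  define w :: "nat \<Rightarrow> complex" where "w k = (if k = 1 then 1 else 1 + \<i>)" for k
  define G where "G = (\<lambda>t::real. \<Sum>k=1..2. a k / (of_real t - \<i> * w k))"
  have s12: "{1..2::nat} = {1, 2}" by auto
  have cnjG: "cnj (G x) = Hc x - Hc (x + 1)" for x
    unfolding G_def s12 Hc_def by (simp add: a_def w_def algebra_simps)
  have nf: "\<not> gabor_frame G \<alpha>"
  proof
    assume "gabor_frame G \<alpha>"
    then obtain A0 B where A0: "0 < A0" and fr: "\<forall>f\<in>L2.
          let c = (\<lambda>(m, n). (cmod (L2_inner f (gabor_atom G \<alpha> m n)))\<^sup>2) in
          (c summable_on (UNIV :: (int \<times> int) set)) \<and>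
          A0 * L2_norm_sq f \<le> infsum c UNIV \<and> infsum c UNIV \<le> B * L2_norm_sq f"
      unfolding gabor_frame_def by blast
    obtain p q :: int where q0: "q > 0" and apq: "\<alpha> = of_int p / of_int q"
      using assms(1) by (metis Rats_cases')
    have p0: "p > 0" using assms(2) q0 apq by (simp add: zero_less_divide_iff)
    define \<mu> where "\<mu> = min 1 (\<alpha>\<^sup>2)"
    have mu0: "\<mu> > 0" using assms(2) by (simp add: \<mu>_def)
    define C where "C = 40 * 4 / \<mu>"
    define Co where "Co m n = integral {0..1} (\<lambda>t. Hc (t - \<alpha> * of_int m) * cnj (ee n t))" for m n :: int
    have bnd: "A0 * of_int (p * int j) \<le> C" if j: "j \<ge> 1" for j :: nat
    proof -
      define K where "K = p * int j"
      define L where "L = q * int j"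
      have j1: "int j \<ge> 1" using j by simp
      have K1: "K \<ge> 1" using mult_mono[OF _ j1, of 1 p] p0 unfolding K_def by simp
      have KL: "\<alpha> * of_int L = of_int K" using q0 unfolding apq K_def L_def by simp
      define f where "f = (\<lambda>t. complex_of_real (indicator {0..real_of_int K} t))"
      have sq_f: "(cmod (f t))\<^sup>2 = indicator {0..real_of_int K} t *\<^sub>R (1::real)" for t
        by (simp add: f_def indicator_def)
      have si: "set_integrable lebesgue {0..real_of_int K} (\<lambda>_. 1::real)"
        by (rule absolutely_integrable_continuous_real) simp
      have fL2: "f \<in> L2"
        unfolding L2_def
      proof (intro CollectI conjI)
        have [measurable]: "{0..real_of_int K} \<in> sets lebesgue" by simp
        show "f \<in> borel_measurable lebesgue" unfolding f_def
          by measurable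
        show "integrable lebesgue (\<lambda>t. (cmod (f t))\<^sup>2)"
          using si unfolding sq_f set_integrable_def .
      qed
      have nrm: "L2_norm_sq f = of_int K"
      proof -
        have "L2_norm_sq f = set_lebesgue_integral lebesgue {0..real_of_int K} (\<lambda>_. 1::real)"
          unfolding L2_norm_sq_def sq_f set_lebesgue_integral_def ..
        also have "\<dots> = integral {0..real_of_int K} (\<lambda>_. 1::real)"
          by (rule set_lebesgue_integral_eq_integral(2)[OF si])
        also have "\<dots> = of_int K" using K1 by simp
        finally show ?thesis .
      qed
      define c where "c = (\<lambda>(m, n). (cmod (L2_inner f (gabor_atom G \<alpha> m n)))\<^sup>2)"
      have summ: "c summable_on (UNIV :: (int \<times> int) set)" and low: "A0 * L2_norm_sq f \<le> infsum c UNIV"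
        using fr fL2 unfolding c_def Let_def by auto
      have cval: "c (m, n) = (cmod (Co m n - Co (m - L) n))\<^sup>2" for m n
        unfolding c_def Co_def f_def using coef[OF cnjG K1 KL] by simp
      have "infsum c UNIV \<le> C"
      proof (rule infsum_le_finite_sums[OF summ])
        fix F :: "(int \<times> int) set" assume F: "finite F" "F \<subseteq> UNIV"
        define M where "M = fst ` F"
        define N where "N = snd ` F"
        have fin: "finite M" "finite N" using F by (auto simp: M_def N_def)
        have FMN: "F \<subseteq> M \<times> N" unfolding M_def N_def by (auto intro: rev_image_eqI)
        have "sum c F \<le> (\<Sum>(m,n)\<in>F. 2 * (cmod (Co m n))\<^sup>2 + 2 * (cmod (Co (m - L) n))\<^sup>2)"
          by (intro sum_mono) (auto simp: cval sq_diff_le)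
        also have "\<dots> \<le> (\<Sum>(m,n)\<in>M \<times> N. 2 * (cmod (Co m n))\<^sup>2 + 2 * (cmod (Co (m - L) n))\<^sup>2)"
          by (intro sum_mono2 FMN) (auto simp: fin)
        also have "\<dots> = 2 * (\<Sum>m\<in>M. \<Sum>n\<in>N. (cmod (Co m n))\<^sup>2) + 2 * (\<Sum>m\<in>M. \<Sum>n\<in>N. (cmod (Co (m - L) n))\<^sup>2)"
          by (simp add: sum.distrib sum_distrib_left sum.cartesian_product split_def)
        also have "(\<Sum>m\<in>M. \<Sum>n\<in>N. (cmod (Co m n))\<^sup>2) \<le> (\<Sum>m\<in>M. 8 / \<mu> * (1 / (1 + (real_of_int m)\<^sup>2)))"
          by (intro sum_mono) (simp add: Co_def \<mu>_def coef_bound[OF assms(2) fin(2)])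
        also have "\<dots> = 8 / \<mu> * (\<Sum>m\<in>M. 1 / (1 + (real_of_int m)\<^sup>2))" by (simp add: sum_distrib_left)
        also have "\<dots> \<le> 8 / \<mu> * 5" using mu0 by (intro mult_left_mono sum_inv_sq fin) auto
        also have "(\<Sum>m\<in>M. \<Sum>n\<in>N. (cmod (Co (m - L) n))\<^sup>2) \<le> (\<Sum>m\<in>M. 8 / \<mu> * (1 / (1 + (real_of_int (m - L))\<^sup>2)))"
        proof (intro sum_mono)
          fix m assume "m \<in> M"
          show "(\<Sum>n\<in>N. (cmod (Co (m - L) n))\<^sup>2) \<le> 8 / \<mu> * (1 / (1 + (real_of_int (m - L))\<^sup>2))"
            using coef_bound[OF assms(2) fin(2), of "m - L"] by (simp add: Co_def \<mu>_def)
        qed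
        also have "\<dots> = 8 / \<mu> * (\<Sum>m\<in>(\<lambda>m. m - L) ` M. 1 / (1 + (real_of_int m)\<^sup>2))"
          by (simp add: sum_distrib_left sum.reindex inj_on_def)
        also have "\<dots> \<le> 8 / \<mu> * 5" using mu0 fin by (intro mult_left_mono sum_inv_sq) auto
        finally show "sum c F \<le> C" by (simp add: C_def)
      qed
      then show ?thesis using low nrm K_def by simp
    qed
    define j where "j = nat (ceiling (C / (A0 * of_int p))) + 1"
    have "j \<ge> 1" unfolding j_def by simp
    then have "A0 * of_int (p * int j) \<le> C" by (rule bnd)
    moreover have "C / (A0 * of_int p) < of_nat j"
      using real_nat_ceiling_ge[of "C / (A0 * of_int p)"] unfolding j_def by simp
    then have "C < A0 * of_int p * of_nat j" using A0 p0 by (simp add: divide_less_eq mult_pos_pos mult.commute)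
    ultimately show False by (simp add: algebra_simps)
  qed
  show ?thesis
    apply (rule exI[of _ 2], rule exI[of _ a], rule exI[of _ w])
    using nf unfolding G_def
    by (auto simp: a_def w_def inj_on_def s12 complex_eq_iff)
qed

end
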